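(* Consider the $nm$ iterations $(i,j)$, $1\le i\le n$, $1\le j\le m$, of the Triangular Basis Algorithm, each viewed as an atomic transformation of the full state (the $x_j$, $\mathrm{used}_j$, $av_i$, $b_i$). Equip the index set with the partial order $(i,j)\le(k,l)\iff i\le k \text{ and } j\le l$. Then for every total ordering of the iterations that extends this partial order (i.e. $(i,j)$ is executed before $(k,l)$ whenever $(i,j)<(k,l)$), executing the iterations in that order from the initial state produces the same final state as the standard lexicographic execution order. In particular, all iterations $(i,j)$ with a fixed value of $i+j$ may be executed in any order (in parallel).
   Context: All arithmetic is over $\mathbb{F}_2$ ($+$ is XOR, $\wedge$ is AND). For a vector $v\in\{0,1\}^n$, $v[i]$ is its $i$-th bit and $v[a..b]$ the substring of bits $a$ through $b$ (empty if $a>b$). Triangular Basis Algorithm. Input: $x_1,\dots,x_m\in\{0,1\}^n$ (modified in place). Auxiliary variables: bits $\mathrm{used}_j$ ($1\le j\le m$) initialized to $0$; bits $av_i$ ($1\le i\le n$) initialized to $1$; strings $b_i[(i+1)..n]$ ($1\le i\le n$) initialized to all zeros. The algorithm executes, for $i=1,\dots,n$ (outer loop) and, inside it, for $j=1,\dots,m$ (inner loop), the following four steps in order (iteration $(i,j)$): (1) $\mathrm{used}_j \leftarrow \mathrm{used}_j + (x_j[i]\wedge av_i)$; (2) $av_i\leftarrow av_i + (x_j[i]\wedge \mathrm{used}_j)$ (using the value of $\mathrm{used}_j$ just updated); (3) if $\mathrm{used}_j=1$: $b_i[(i+1)..n]\leftarrow b_i[(i+1)..n]+x_j[(i+1)..n]$;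 (4) if $x_j[i]=1$: $x_j[(i+1)..n]\leftarrow x_j[(i+1)..n]+b_i[(i+1)..n]$. *)

theory Defs
  imports Main
begin

text \<open>Bits of F_2 are modelled as bool; addition in F_2 is XOR, written here as bxor.\<close>

definition bxor :: "bool \<Rightarrow> bool \<Rightarrow> bool" where
  "bxor a b \<longleftrightarrow> a \<noteq> b"

text \<open>Full state of the Triangular Basis Algorithm.
  xs j i = bit i of vector x_j;  used j = used_j;  av i = av_i;  bs i k = bit k of b_i
  (only k in (i+1)..n is meaningful).\<close>

record tb_state =
  xs   :: "nat \<Rightarrow> nat \<Rightarrow> bool"
  used :: "nat \<Rightarrow> bool"
  av   :: "nat \<Rightarrow> bool"
  bs   :: "nat \<Rightarrow> nat \<Rightarrow> bool"

definition tb_init :: "(nat \<Rightarrow> nat \<Rightarrow> bool) \<Rightarrow> tb_state" where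
  "tb_init x = \<lparr> xs = x, used = (\<lambda>_. False), av = (\<lambda>_. True), bs = (\<lambda>_ _. False) \<rparr>"

definition tb_step :: "nat \<Rightarrow> nat \<times> nat \<Rightarrow> tb_state \<Rightarrow> tb_state" where
  "tb_step n ij s =
    (let i = fst ij; j = snd ij;
         xji = xs s j i;
         u' = bxor (used s j) (xji \<and> av s i);
         a' = bxor (av s i) (xji \<and> u');
         bi' = (\<lambda>k. if u' \<and> i + 1 \<le> k \<and> k \<le> n then bxor (bs s i k) (xs s j k) else bs s i k);
         xj' = (\<lambda>k. if xji \<and> i + 1 \<le> k \<and> k \<le> n then bxor (xs s j k) (bi' k) else xs s j k)
     in \<lparr> xs = (xs s)(j := xj'), used = (used s)(j := u'),
          av = (av s)(i := a'), bs = (bs s)(i := bi') \<rparr>)"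

definition tb_run :: "nat \<Rightarrow> (nat \<times> nat) list \<Rightarrow> tb_state \<Rightarrow> tb_state" where
  "tb_run n ord s = fold (tb_step n) ord s"

definition lex_order :: "nat \<Rightarrow> nat \<Rightarrow> (nat \<times> nat) list" where
  "lex_order n m = concat (map (\<lambda>i. map (\<lambda>j. (i, j)) [1..<m+1]) [1..<n+1])"

definition linear_extension :: "nat \<Rightarrow> nat \<Rightarrow> (nat \<times> nat) list \<Rightarrow> bool" where
  "linear_extension n m ord \<longleftrightarrow>
     distinct ord \<and> set ord = {1..n} \<times> {1..m} \<and>
     (\<forall>a < length ord. \<forall>b < length ord.
        fst (ord ! a) \<le> fst (ord ! b) \<and> snd (ord ! a) \<le> snd (ord ! b) \<and> ord ! a \<noteq> ord ! b
        \<longrightarrow> a < b)"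

end

theory Submission
  imports Defs
begin

definition R :: "nat \<times> nat \<Rightarrow> nat \<times> nat \<Rightarrow> bool" where
  "R u v \<longleftrightarrow> \<not> (fst v \<le> fst u \<and> snd v \<le> snd u \<and> v \<noteq> u)"

lemma step_comm:
  assumes "fst a \<noteq> fst b" "snd a \<noteq> snd b"
  shows "tb_step n a (tb_step n b s) = tb_step n b (tb_step n a s)"
  using assms
  by (cases a; cases b) (simp add: tb_step_def Let_def fun_upd_twist)

lemma fold_comm:
  assumes "\<forall>y\<in>set p. fst y \<noteq> fst x \<and> snd y \<noteq> snd x"
  shows "fold (tb_step n) p (tb_step n x s) = tb_step n x (fold (tb_step n) p s)"
  using assms
proof (induction p arbitrary: s)
  case Nil then show ?case by simp
next
  case (Cons a p)
  have "tb_step n a (tb_step n x s) = tb_step n x (tb_step n a s)"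
    using Cons.prems step_comm[of a x n s] by auto
  then show ?case using Cons by simp
qed

lemma fold_perm:
  "distinct zs \<Longrightarrow> distinct ws \<Longrightarrow> set zs = set ws \<Longrightarrow> sorted_wrt R zs \<Longrightarrow> sorted_wrt R ws
   \<Longrightarrow> fold (tb_step n) zs s = fold (tb_step n) ws s"
proof (induction zs arbitrary: ws s)
  case Nil then show ?case by simp
next
  case (Cons x zs)
  have "x \<in> set ws" using Cons.prems by auto
  then obtain p q where ws: "ws = p @ x # q" by (meson split_list)
  have inc: "\<forall>y\<in>set p. fst y \<noteq> fst x \<and> snd y \<noteq> snd x"
  proof
    fix y assume y: "y \<in> set p"
    have "R y x" using Cons.prems(5) y unfolding ws by (auto simp: sorted_wrt_append)
    moreover have "y \<noteq> x" using Cons.prems(2) y unfolding ws by auto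
    moreover have "y \<in> set zs" using Cons.prems(3) y \<open>y \<noteq> x\<close> unfolding ws by auto
    hence "R x y" using Cons.prems(4) by auto
    ultimately show "fst y \<noteq> fst x \<and> snd y \<noteq> snd x"
      unfolding R_def by (cases x; cases y) auto
  qed
  have "fold (tb_step n) ws s = fold (tb_step n) q (fold (tb_step n) p (tb_step n x s))"
    unfolding ws using fold_comm[OF inc, of n s] by simp
  also have "\<dots> = fold (tb_step n) (p @ q) (tb_step n x s)" by simp
  also have "\<dots> = fold (tb_step n) zs (tb_step n x s)"
  proof (rule sym, rule Cons.IH)
    show "distinct zs" using Cons.prems by simp
    show "distinct (p @ q)" using Cons.prems(2) unfolding ws by simp
    show "set zs = set (p @ q)" using Cons.prems(1-3) unfolding ws by auto
    show "sorted_wrt R zs" using Cons.prems by simp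
    show "sorted_wrt R (p @ q)" using Cons.prems(5) unfolding ws
      by (auto simp: sorted_wrt_append)
  qed
  finally show ?case by simp
qed

lemma lex_Suc: "lex_order (Suc n) m = lex_order n m @ map (\<lambda>j. (Suc n, j)) [1..<m+1]"
  unfolding lex_order_def by simp

lemma lex_props: "distinct (lex_order n m) \<and> set (lex_order n m) = {1..n} \<times> {1..m}
   \<and> sorted_wrt (\<lambda>u v. fst u < fst v \<or> (fst u = fst v \<and> snd u < snd v)) (lex_order n m)"
proof (induction n)
  case 0 then show ?case by (simp add: lex_order_def)
next
  case (Suc n)
  have s: "set (lex_order (Suc n) m) = {1..Suc n} \<times> {1..m}"
    using Suc unfolding lex_Suc by (auto simp: le_Suc_eq)
  show ?case unfolding s using Suc unfolding lex_Suc
    by (auto simp: sorted_wrt_append sorted_wrt_map distinct_map inj_on_def intro: sorted_wrt_mono_rel[OF _ sorted_wrt_upt])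
qed

theorem mainTheorem4:
  fixes n m :: nat and x :: "nat \<Rightarrow> nat \<Rightarrow> bool" and ord :: "(nat \<times> nat) list"
  assumes "linear_extension n m ord"
  shows "tb_run n ord (tb_init x) = tb_run n (lex_order n m) (tb_init x)"
proof -
  have d: "distinct ord" and st: "set ord = {1..n} \<times> {1..m}"
    and o: "\<forall>a < length ord. \<forall>b < length ord.
        fst (ord ! a) \<le> fst (ord ! b) \<and> snd (ord ! a) \<le> snd (ord ! b) \<and> ord ! a \<noteq> ord ! b
        \<longrightarrow> a < b"
    using assms unfolding linear_extension_def by auto
  have s1: "sorted_wrt R ord"
    unfolding sorted_wrt_iff_nth_less R_def
  proof (intro allI impI)
    fix i j assume "i < j" "j < length ord"
    then show "\<not> (fst (ord ! j) \<le> fst (ord ! i) \<and> snd (ord ! j) \<le> snd (ord ! i) \<and> ord ! j \<noteq> ord ! i)"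
      using o[rule_format, of j i] by auto
  qed
  have s2: "sorted_wrt R (lex_order n m)"
    using lex_props[of n m] by (metis (mono_tags, lifting) sorted_wrt_mono_rel R_def not_le)
  show ?thesis unfolding tb_run_def
    using fold_perm[OF d _ _ s1 s2] lex_props[of n m] st by auto
qed

end
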